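(* Let $r_0,r_1,r_2\ge 1$ with $r_1<r_0$ and $r_1<r_2$, and let $L=\mathfrak{g}(r_0,r_1,r_2)$. Then $b(L)\le r_1(r_0-r_1)+r_1r_2=r_1(r_0+r_2-r_1)$.
   Context: All Lie algebras are over an algebraically closed field $\mathbf{k}$ of characteristic zero. $\mathcal{P}(r_0,r_1,r_2)$ is the poset on $\{b_1,\dots,b_{r_0},m_1,\dots,m_{r_1},t_1,\dots,t_{r_2}\}$ whose strict relations are exactly $b_i\prec m_j$, $m_j\prec t_k$ and $b_i\prec t_k$ for all $i,j,k$. $\mathfrak{g}(r_0,r_1,r_2)$ denotes the nilpotent Lie poset algebra $\mathfrak{g}^{\prec}(\mathcal{P}(r_0,r_1,r_2))$: the Lie algebra under the commutator bracket spanned by matrix units $E_{p,q}$ with $p\prec q$. The breadth of a Lie algebra $L$ is $b(L)=\max_{x\in L}\operatorname{rank}(\mathrm{ad}_x)$, where $\mathrm{ad}_x=[x,-]$. *)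

theory Defs
  imports Main "HOL-Library.Function_Algebras" "HOL-Computational_Algebra.Polynomial"
begin

text \<open>Elements of the poset P(r0,r1,r2): b_i, m_j, t_k.\<close>
datatype pelt = Bt nat | Md nat | Tp nat

definition pcarrier :: "nat \<Rightarrow> nat \<Rightarrow> nat \<Rightarrow> pelt set" where
  "pcarrier r0 r1 r2 = Bt ` {1..r0} \<union> Md ` {1..r1} \<union> Tp ` {1..r2}"

definition pless :: "nat \<Rightarrow> nat \<Rightarrow> nat \<Rightarrow> pelt \<Rightarrow> pelt \<Rightarrow> bool" where
  "pless r0 r1 r2 p q \<longleftrightarrow> p \<in> pcarrier r0 r1 r2 \<and> q \<in> pcarrier r0 r1 r2 \<and>
     (case (p, q) of (Bt _, Md _) \<Rightarrow> True | (Md _, Tp _) \<Rightarrow> True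
                   | (Bt _, Tp _) \<Rightarrow> True | _ \<Rightarrow> False)"

type_synonym 'a pmat = "pelt \<Rightarrow> pelt \<Rightarrow> 'a"

definition pscale :: "'a::field \<Rightarrow> 'a pmat \<Rightarrow> 'a pmat" where
  "pscale c X = (\<lambda>p q. c * X p q)"

text \<open>The nilpotent Lie poset algebra: span of the matrix units E_{p,q} with p < q,
  i.e. matrices supported on the strict relation.\<close>
definition lie_poset_alg :: "(pelt \<Rightarrow> pelt \<Rightarrow> bool) \<Rightarrow> ('a::field) pmat set" where
  "lie_poset_alg R = {X. \<forall>p q. \<not> R p q \<longrightarrow> X p q = 0}"

definition pmult :: "pelt set \<Rightarrow> ('a::field) pmat \<Rightarrow> 'a pmat \<Rightarrow> 'a pmat" where
  "pmult S X Y = (\<lambda>p q. \<Sum>r\<in>S. X p r * Y r q)"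

definition pbracket :: "pelt set \<Rightarrow> ('a::field) pmat \<Rightarrow> 'a pmat \<Rightarrow> 'a pmat" where
  "pbracket S X Y = (\<lambda>p q. pmult S X Y p q - pmult S Y X p q)"

definition g_alg :: "nat \<Rightarrow> nat \<Rightarrow> nat \<Rightarrow> ('a::field) pmat set" where
  "g_alg r0 r1 r2 = lie_poset_alg (pless r0 r1 r2)"

definition ad_rank :: "nat \<Rightarrow> nat \<Rightarrow> nat \<Rightarrow> ('a::field) pmat \<Rightarrow> nat" where
  "ad_rank r0 r1 r2 x =
     vector_space.dim pscale (pbracket (pcarrier r0 r1 r2) x ` g_alg r0 r1 r2)"

definition breadth :: "nat \<Rightarrow> nat \<Rightarrow> nat \<Rightarrow> ('a::field) itself \<Rightarrow> nat" where
  "breadth r0 r1 r2 (_ :: 'a itself) =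
     Max ((\<lambda>x::'a pmat. ad_rank r0 r1 r2 x) ` g_alg r0 r1 r2)"

definition alg_closed :: "('a::field) itself \<Rightarrow> bool" where
  "alg_closed (_ :: 'a itself) \<longleftrightarrow>
     (\<forall>p :: 'a poly. degree p > 0 \<longrightarrow> (\<exists>z. poly p z = 0))"

lemma pscale_vector_space: "vector_space (pscale :: 'a::field \<Rightarrow> 'a pmat \<Rightarrow> 'a pmat)"
  by unfold_locales (auto simp: pscale_def fun_eq_iff algebra_simps)

end

theory Submission
  imports Defs
begin

definition vscale :: "'a::field \<Rightarrow> (pelt \<Rightarrow> 'a) \<Rightarrow> (pelt \<Rightarrow> 'a)" where
  "vscale c v = (\<lambda>p. c * v p)"

lemma vscale_vector_space: "vector_space (vscale :: 'a::field \<Rightarrow> (pelt \<Rightarrow> 'a) \<Rightarrow> _)"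
  by unfold_locales (auto simp: vscale_def fun_eq_iff algebra_simps)

interpretation V: vector_space "vscale :: 'a::field \<Rightarrow> (pelt \<Rightarrow> 'a) \<Rightarrow> _"
  by (rule vscale_vector_space)

interpretation M: vector_space "pscale :: 'a::field \<Rightarrow> 'a pmat \<Rightarrow> _"
  by (rule pscale_vector_space)

definition outer :: "(pelt \<Rightarrow> 'a::field) \<Rightarrow> (pelt \<Rightarrow> 'a) \<Rightarrow> 'a pmat" where
  "outer u w = (\<lambda>p q. u p * w q)"

lemma fsum_apply: "(sum f A) x = sum (\<lambda>a. f a x) A"
  by (induction A rule: infinite_finite_induct) auto

lemma hom1: "module_hom vscale pscale (\<lambda>a. outer a (w::pelt \<Rightarrow> 'a::field))"
  unfolding module_hom_def module_hom_axioms_def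
  using V.module_axioms M.module_axioms
  by (auto simp: outer_def vscale_def pscale_def fun_eq_iff algebra_simps)

lemma hom2: "module_hom vscale pscale (\<lambda>b. outer (u::pelt \<Rightarrow> 'a::field) b)"
  unfolding module_hom_def module_hom_axioms_def
  using V.module_axioms M.module_axioms
  by (auto simp: outer_def vscale_def pscale_def fun_eq_iff algebra_simps)

lemma outer_span1:
  assumes "u \<in> V.span A"
  shows "outer u (w::pelt \<Rightarrow> 'a::field) \<in> M.span ((\<lambda>a. outer a w) ` A)"
  using module_hom.span_image[OF hom1[of w], of A] assms by blast

lemma outer_span2:
  assumes "w \<in> V.span A"
  shows "outer (u::pelt \<Rightarrow> 'a::field) w \<in> M.span ((\<lambda>b. outer u b) ` A)"
  using module_hom.span_image[OF hom2[of u], of A] assms by blast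

lemma supp_span:
  fixes v :: "pelt \<Rightarrow> 'a::field"
  assumes "finite I" "inj f" "\<And>p. v p \<noteq> 0 \<Longrightarrow> p \<in> f ` I"
  shows "v \<in> V.span ((\<lambda>i p. if p = f i then 1 else 0) ` I)"
proof -
  have eq: "v = (\<Sum>i\<in>I. vscale (v (f i)) (\<lambda>p. if p = f i then 1 else 0))"
  proof
    fix p
    show "v p = (\<Sum>i\<in>I. vscale (v (f i)) (\<lambda>p. if p = f i then 1 else 0)) p"
    proof (cases "p \<in> f ` I")
      case True
      then obtain j where j: "j \<in> I" "p = f j" by auto
      have "(\<Sum>i\<in>I. vscale (v (f i)) (\<lambda>p. if p = f i then 1 else 0)) p
          = (\<Sum>i\<in>I. if i = j then v (f j) else 0)"
        unfolding fsum_apply using assms(2) j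
        by (intro sum.cong) (auto simp: vscale_def inj_eq)
      also have "\<dots> = v p" using j assms(1) by simp
      finally show ?thesis by simp
    next
      case False
      then have "v p = 0" using assms(3) by auto
      moreover have "(\<Sum>i\<in>I. vscale (v (f i)) (\<lambda>p. if p = f i then 1 else 0)) p = 0"
        unfolding fsum_apply using False by (intro sum.neutral) (auto simp: vscale_def)
      ultimately show ?thesis by simp
    qed
  qed
  show ?thesis
    by (subst eq, intro V.span_sum V.span_scale V.span_base) auto
qed

lemma galg_supp:
  assumes "x \<in> g_alg r0 r1 r2" "x p q \<noteq> 0"
  shows "pless r0 r1 r2 p q"
  using assms unfolding g_alg_def lie_poset_alg_def by auto

lemma col_supp:
  assumes "x \<in> g_alg r0 r1 r2" "x p (Md m) \<noteq> 0"
  shows "p \<in> Bt ` {1..r0}"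
  using galg_supp[OF assms] unfolding pless_def pcarrier_def
  by (cases p) auto

lemma row_supp:
  assumes "x \<in> g_alg r0 r1 r2" "x (Md m) q \<noteq> 0"
  shows "q \<in> Tp ` {1..r2}"
  using galg_supp[OF assms] unfolding pless_def pcarrier_def
  by (cases q) auto

lemma pmult_eq:
  assumes "x \<in> g_alg r0 r1 r2" "y \<in> g_alg r0 r1 r2"
  shows "pmult (pcarrier r0 r1 r2) x y p q = (\<Sum>m\<in>{1..r1}. x p (Md m) * y (Md m) q)"
proof -
  have "pmult (pcarrier r0 r1 r2) x y p q = (\<Sum>r\<in>Md ` {1..r1}. x p r * y r q)"
    unfolding pmult_def
  proof (rule sum.mono_neutral_right)
    show "finite (pcarrier r0 r1 r2)" by (simp add: pcarrier_def)
    show "Md ` {1..r1} \<subseteq> pcarrier r0 r1 r2" by (auto simp: pcarrier_def)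
    show "\<forall>i\<in>pcarrier r0 r1 r2 - Md ` {1..r1}. x p i * y i q = 0"
    proof
      fix i assume i: "i \<in> pcarrier r0 r1 r2 - Md ` {1..r1}"
      show "x p i * y i q = 0"
      proof (cases i)
        case (Bt k)
        have "x p i = 0"
        proof (rule ccontr)
          assume "x p i \<noteq> 0"
          from galg_supp[OF assms(1) this] show False unfolding pless_def Bt
            by (cases p) auto
        qed
        then show ?thesis by simp
      next
        case (Md k)
        then show ?thesis using i by (auto simp: pcarrier_def)
      next
        case (Tp k)
        have "y i q = 0"
        proof (rule ccontr)
          assume "y i q \<noteq> 0"
          from galg_supp[OF assms(2) this] show False unfolding pless_def Tp
            by (cases q) auto
        qed
        then show ?thesis by simp
      qed
    qed
  qed
  also have "\<dots> = (\<Sum>m\<in>{1..r1}. x p (Md m) * y (Md m) q)"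
    by (subst sum.reindex) (auto simp: inj_on_def)
  finally show ?thesis .
qed

lemma bracket_eq:
  assumes "x \<in> g_alg r0 r1 r2" "y \<in> g_alg r0 r1 r2"
  shows "pbracket (pcarrier r0 r1 r2) x y =
    (\<Sum>m\<in>{1..r1}. outer (\<lambda>p. x p (Md m)) (\<lambda>q. y (Md m) q)
                   - outer (\<lambda>p. y p (Md m)) (\<lambda>q. x (Md m) q))"
  by (auto simp: fun_eq_iff pbracket_def pmult_eq[OF assms] pmult_eq[OF assms(2,1)]
      fsum_apply outer_def sum_subtractf)

lemma arith_bound:
  fixes s e r0 r1 r2 :: nat
  assumes "s \<le> r1" "s + e \<le> r0" "r1 < r0" "r1 < r2"
  shows "s * r2 + e * r1 \<le> r1 * (r0 - r1) + r1 * r2"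
proof -
  have "e \<le> r0 - s" using assms by simp
  then have "e * r1 \<le> (r0 - s) * r1" by (rule mult_le_mono1)
  moreover have "s * r2 + (r0 - s) * r1 \<le> r1 * (r0 - r1) + r1 * r2"
  proof -
    have "int (s * r2 + (r0 - s) * r1) = int s * int r2 + (int r0 - int s) * int r1"
      using assms by (simp add: of_nat_diff)
    moreover have "int (r1 * (r0 - r1) + r1 * r2) = int r1 * (int r0 - int r1) + int r1 * int r2"
      using assms by (simp add: of_nat_diff)
    moreover have "int s * int r2 + (int r0 - int s) * int r1
        \<le> int r1 * (int r0 - int r1) + int r1 * int r2"
    proof -
      have "0 \<le> (int r1 - int s) * (int r2 - int r1)" using assms by simp
      then show ?thesis by (simp add: algebra_simps)
    qed
    ultimately show ?thesis by linarith
  qed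
  ultimately show ?thesis by linarith
qed

lemma rank_bound:
  fixes x :: "'a::field pmat"
  assumes x: "x \<in> g_alg r0 r1 r2" and r: "r1 < r0" "r1 < r2"
  shows "ad_rank r0 r1 r2 x \<le> r1 * (r0 - r1) + r1 * r2"
proof -
  define col :: "'a pmat \<Rightarrow> nat \<Rightarrow> pelt \<Rightarrow> 'a" where "col = (\<lambda>z m p. z p (Md m))"
  define row :: "'a pmat \<Rightarrow> nat \<Rightarrow> pelt \<Rightarrow> 'a" where "row = (\<lambda>z m q. z (Md m) q)"
  define eB :: "nat \<Rightarrow> pelt \<Rightarrow> 'a" where "eB = (\<lambda>i p. if p = Bt i then 1 else 0)"
  define eT :: "nat \<Rightarrow> pelt \<Rightarrow> 'a" where "eT = (\<lambda>i p. if p = Tp i then 1 else 0)"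
  define Cols where "Cols = col x ` {1..r1}"
  define Rows where "Rows = row x ` {1..r1}"
  define EB where "EB = eB ` {1..r0}"
  define ET where "ET = eT ` {1..r2}"
  have colB: "col z m \<in> V.span EB" if "z \<in> g_alg r0 r1 r2" for z m
    unfolding EB_def eB_def col_def
    by (rule supp_span) (use col_supp[OF that] in \<open>auto simp: inj_def\<close>)
  have rowT: "row z m \<in> V.span ET" if "z \<in> g_alg r0 r1 r2" for z m
    unfolding ET_def eT_def row_def
    by (rule supp_span) (use row_supp[OF that] in \<open>auto simp: inj_def\<close>)
  obtain S where S: "S \<subseteq> Cols" "V.independent S" "Cols \<subseteq> V.span S"
    using V.maximal_independent_subset by blast
  have finS: "finite S" using S(1) Cols_def finite_subset by blast
  have cardS: "card S \<le> r1"
    using card_mono[OF _ S(1)] card_image_le[of "{1..r1}" "col x"] Cols_def by fastforce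
  have ColsEB: "Cols \<subseteq> V.span EB" using colB[OF x] Cols_def by auto
  have "S \<subseteq> S \<union> EB" by auto
  then obtain B where B: "S \<subseteq> B" "B \<subseteq> S \<union> EB" "V.independent B" "S \<union> EB \<subseteq> V.span B"
    using V.maximal_independent_subset_extend[OF _ S(2)] by metis
  have "B \<subseteq> V.span EB" using B(2) S(1) ColsEB V.span_superset by blast
  then have Bb: "finite B \<and> card B \<le> card EB"
    using V.independent_span_bound[OF _ B(3)] EB_def by auto
  define E' where "E' = B - S"
  have cardSE: "card S + card E' \<le> r0"
  proof -
    have "card S + card E' = card B" unfolding E'_def using B(1) Bb
      by (metis card_Diff_subset finS card_mono le_add_diff_inverse)
    also have "\<dots> \<le> card EB" using Bb by simp
    also have "\<dots> \<le> r0" unfolding EB_def using card_image_le[of "{1..r0}" eB] by simp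
    finally show ?thesis .
  qed
  have finE': "finite E'" using Bb E'_def by auto
  define G where "G = (\<lambda>(u,w). outer u w) ` (S \<times> ET) \<union> (\<lambda>(u,w). outer u w) ` (E' \<times> Rows)"
  have finG: "finite G" unfolding G_def ET_def Rows_def using finS finE' by auto
  have cardG: "card G \<le> card S * r2 + card E' * r1"
  proof -
    have "card G \<le> card ((\<lambda>(u,w). outer u w) ` (S \<times> ET)) + card ((\<lambda>(u,w). outer u w) ` (E' \<times> Rows))"
      unfolding G_def by (rule card_Un_le)
    also have "\<dots> \<le> card (S \<times> ET) + card (E' \<times> Rows)"
      by (intro add_mono card_image_le) (simp_all add: finS finE' ET_def Rows_def)
    also have "\<dots> \<le> card S * r2 + card E' * r1"
      unfolding card_cartesian_product ET_def Rows_def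
      using card_image_le[of "{1..r2}" eT] card_image_le[of "{1..r1}" "row x"]
      by (intro add_mono mult_le_mono2) auto
    finally show ?thesis .
  qed
  have spanG_mono: "M.span A \<subseteq> M.span G" if "A \<subseteq> M.span G" for A
    using M.span_mono[OF that] by (simp only: M.span_span)
  have keyA: "outer u w \<in> M.span G" if "u \<in> V.span S" "w \<in> V.span ET" for u w
  proof -
    have "outer u w \<in> M.span ((\<lambda>b. outer u b) ` ET)" by (rule outer_span2[OF that(2)])
    moreover have "(\<lambda>b. outer u b) ` ET \<subseteq> M.span G"
    proof
      fix z assume "z \<in> (\<lambda>b. outer u b) ` ET"
      then obtain e where e: "e \<in> ET" "z = outer u e" by auto
      have "outer u e \<in> M.span ((\<lambda>a. outer a e) ` S)" by (rule outer_span1[OF that(1)])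
      moreover have "(\<lambda>a. outer a e) ` S \<subseteq> M.span G"
        using e(1) by (auto simp: G_def intro!: M.span_base)
      ultimately show "z \<in> M.span G" using e spanG_mono by blast
    qed
    ultimately show ?thesis using spanG_mono by blast
  qed
  have keyB: "outer u w \<in> M.span G" if "u \<in> V.span EB" "w \<in> Rows" for u w
  proof -
    have "EB \<subseteq> V.span B" using B(4) by auto
    then have "V.span EB \<subseteq> V.span (V.span B)" by (rule V.span_mono)
    then have "V.span EB \<subseteq> V.span B" by (simp only: V.span_span)
    moreover have "S \<union> E' = B" unfolding E'_def using B(1) by auto
    ultimately have "u \<in> V.span (S \<union> E')" using that(1) by auto
    then obtain a b where ab: "u = a + b" "a \<in> V.span S" "b \<in> V.span E'"
      unfolding V.span_Un by blast
    have "outer u w = outer a w + outer b w" by (auto simp: ab outer_def fun_eq_iff algebra_simps)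
    moreover have "outer a w \<in> M.span G"
      using keyA[OF ab(2)] that rowT[OF x] Rows_def by blast
    moreover have "outer b w \<in> M.span G"
    proof -
      have "outer b w \<in> M.span ((\<lambda>a. outer a w) ` E')" by (rule outer_span1[OF ab(3)])
      moreover have "(\<lambda>a. outer a w) ` E' \<subseteq> M.span G"
        using that by (auto simp: G_def intro!: M.span_base)
      ultimately show ?thesis using spanG_mono by blast
    qed
    ultimately show ?thesis by (simp add: M.span_add)
  qed
  have img: "pbracket (pcarrier r0 r1 r2) x ` g_alg r0 r1 r2 \<subseteq> M.span G"
  proof
    fix z assume "z \<in> pbracket (pcarrier r0 r1 r2) x ` g_alg r0 r1 r2"
    then obtain y where y: "y \<in> g_alg r0 r1 r2" "z = pbracket (pcarrier r0 r1 r2) x y" by auto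
    have "z = (\<Sum>m\<in>{1..r1}. outer (col x m) (row y m) - outer (col y m) (row x m))"
      unfolding y(2) bracket_eq[OF x y(1)] col_def row_def by simp
    also have "\<dots> \<in> M.span G"
    proof (intro M.span_sum M.span_diff)
      fix m assume m: "m \<in> {1..r1}"
      show "outer (col x m) (row y m) \<in> M.span G"
        using keyA S(3) m rowT[OF y(1)] Cols_def by blast
      show "outer (col y m) (row x m) \<in> M.span G"
        using keyB colB[OF y(1)] m Rows_def by blast
    qed
    finally show "z \<in> M.span G" .
  qed
  have "ad_rank r0 r1 r2 x \<le> card G"
    unfolding ad_rank_def using M.dim_le_card[OF img finG] .
  also have "\<dots> \<le> r1 * (r0 - r1) + r1 * r2"
    using cardG arith_bound[OF cardS cardSE r] by linarith
  finally show ?thesis .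
qed

theorem theorem4:
  fixes r0 r1 r2 :: nat
  assumes "alg_closed TYPE('a::field_char_0)"
    and "r0 \<ge> 1" and "r1 \<ge> 1" and "r2 \<ge> 1"
    and "r1 < r0" and "r1 < r2"
  shows "breadth r0 r1 r2 TYPE('a) \<le> r1 * (r0 - r1) + r1 * r2
       \<and> r1 * (r0 - r1) + r1 * r2 = r1 * (r0 + r2 - r1)"
proof
  let ?N = "r1 * (r0 - r1) + r1 * r2"
  let ?A = "(\<lambda>x::'a pmat. ad_rank r0 r1 r2 x) ` g_alg r0 r1 r2"
  have le: "\<forall>k\<in>?A. k \<le> ?N" using rank_bound assms(5,6) by blast
  have fin: "finite ?A" using le by (meson finite_atMost finite_subset atMost_iff subsetI)
  have ne: "?A \<noteq> {}" by (auto simp: g_alg_def lie_poset_alg_def)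
  show "breadth r0 r1 r2 TYPE('a) \<le> ?N"
    unfolding breadth_def using Max_le_iff[OF fin ne] le by blast
  show "?N = r1 * (r0 + r2 - r1)" using assms(5)
    by (simp add: diff_mult_distrib2 add_mult_distrib2)
qed

end
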